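(* Let $F$ be Richard Thompson's group with standard generators $x_0,x_1,x_2,\ldots$. Let $k\ge1$, let $i_1,\ldots,i_k$ be even nonnegative integers, let $j_1,\ldots,j_k$ be odd positive integers, and let $\epsilon_1,\delta_1,\ldots,\epsilon_k,\delta_k\in\{1,-1\}$. Then the word $x_{i_1}^{\epsilon_1}x_{j_1}^{\delta_1}x_{i_2}^{\epsilon_2}x_{j_2}^{\delta_2}\cdots x_{i_k}^{\epsilon_k}x_{j_k}^{\delta_k}$ does not represent the identity element of $F$.
   Context: Thompson's group $F$ is the group given by the presentation $\langle x_0,x_1,x_2,\ldots \mid x_jx_i=x_ix_{j+1}\ (0\le i<j)\rangle$. *)

theory Defs
  imports Main
begin

text \<open>Words over the generators x_0, x_1, ... of Thompson's group F.
  A letter (n, True) stands for x_n, and (n, False) for x_n^{-1}.\<close>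

type_synonym letter = "nat \<times> bool"

inductive F_eq :: "letter list \<Rightarrow> letter list \<Rightarrow> bool" where
  F_refl: "F_eq w w"
| F_sym: "F_eq u v \<Longrightarrow> F_eq v u"
| F_trans: "F_eq u v \<Longrightarrow> F_eq v w \<Longrightarrow> F_eq u w"
| F_cancel: "F_eq (u @ [(n, b), (n, \<not> b)] @ v) (u @ v)"
| F_rel: "i < j \<Longrightarrow> F_eq (u @ [(j, True), (i, True)] @ v) (u @ [(i, True), (Suc j, True)] @ v)"

definition letter_pow :: "nat \<Rightarrow> int \<Rightarrow> letter" where
  "letter_pow n e = (n, e = 1)"

end

theory Submission
  imports Defs
begin

type_synonym sq = "nat \<Rightarrow> bool"

definition scons :: "bool \<Rightarrow> sq \<Rightarrow> sq" where
  "scons b s = (\<lambda>n. if n = 0 then b else s (n - 1))"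
definition stl :: "sq \<Rightarrow> sq" where
  "stl s = (\<lambda>n. s (Suc n))"

lemma scons_0[simp]: "scons b s 0 = b" by (simp add: scons_def)
lemma scons_Suc[simp]: "scons b s (Suc n) = s n" by (simp add: scons_def)
lemma stl_scons[simp]: "stl (scons b s) = s" by (simp add: scons_def stl_def)
lemma stl_0[simp]: "stl s 0 = s 1" by (simp add: stl_def)

lemma seq_ext: "f 0 = g 0 \<Longrightarrow> f 1 = g 1 \<Longrightarrow> (\<And>m. f (Suc (Suc m)) = g (Suc (Suc m))) \<Longrightarrow> f = g"
proof (rule ext)
  fix n assume "f 0 = g 0" "f 1 = g 1" "\<And>m. f (Suc (Suc m)) = g (Suc (Suc m))"
  then show "f n = g n" by (cases n; cases "n - 1") auto
qed

fun Xg :: "nat \<Rightarrow> bool \<Rightarrow> sq \<Rightarrow> sq" where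
  "Xg 0 True s = (if \<not> s 0 then scons False s
                  else if \<not> s 1 then scons False (scons True (stl (stl s))) else stl s)"
| "Xg 0 False s = (if s 0 then scons True s
                  else if \<not> s 1 then stl s else scons True (scons False (stl (stl s))))"
| "Xg (Suc n) b s = (if s 0 then scons True (Xg n b (stl s)) else s)"

lemma Xg_inv: "Xg n b (Xg n (\<not> b) s) = s"
proof (induction n arbitrary: s)
  case 0
  show ?case
    by (cases b; cases "s 0"; cases "s 1"; rule seq_ext) (simp_all add: stl_def)
next
  case (Suc n)
  show ?case
  proof (cases "s 0")
    case True
    have "Xg (Suc n) b (Xg (Suc n) (\<not> b) s) = scons True (stl s)"
      using True Suc.IH by simp
    also have "\<dots> = s" using True by (intro seq_ext) (simp_all add: stl_def)
    finally show ?thesis .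
  qed simp
qed

lemma Xg_rel: "i < j \<Longrightarrow> Xg j True (Xg i True s) = Xg i True (Xg (Suc j) True s)"
proof (induction i arbitrary: j s)
  case 0
  then obtain j' where j: "j = Suc j'" by (cases j) auto
  show ?case unfolding j
    by (cases "s 0"; cases "s 1"; rule seq_ext) (simp_all add: stl_def)
next
  case (Suc i)
  then obtain j' where j: "j = Suc j'" and "i < j'" by (cases j) auto
  then show ?case using Suc.IH by simp
qed

declare Xg.simps(1,2)[simp del]

primrec act :: "letter list \<Rightarrow> sq \<Rightarrow> sq" where
  "act [] = id"
| "act (x # w) = Xg (fst x) (snd x) \<circ> act w"

lemma act_append: "act (u @ v) = act u \<circ> act v"
  by (induction u) auto

lemma F_eq_act: "F_eq u v \<Longrightarrow> act u = act v"
proof (induction rule: F_eq.induct)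
  case (F_cancel u n b v)
  have "act [(n, b), (n, \<not> b)] = id"
    using Xg_inv[of n b] by (auto simp: fun_eq_iff)
  then show ?case by (simp add: act_append fun_eq_iff Xg_inv)
next
  case (F_rel i j u v)
  have "act [(j, True), (i, True)] = act [(i, True), (Suc j, True)]"
    using Xg_rel[OF F_rel] by (auto simp: fun_eq_iff)
  then show ?case by (simp add: act_append fun_eq_iff Xg_rel[OF F_rel] del: Xg.simps)
qed auto

fun E0 :: "letter list \<Rightarrow> int" where
  "E0 [] = 0"
| "E0 (x # w) = (if fst x = 0 then (if snd x then 1 else -1) else 0) + E0 w"

lemma E0_abs: "\<bar>E0 w\<bar> \<le> int (length w)"
  by (induction w) auto

definition pt :: "int \<Rightarrow> sq" where "pt z = (\<lambda>n. z \<le> int n)"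

lemma pt_act: "int (length w) + 2 \<le> z \<Longrightarrow> act w (pt z) = pt (z + E0 w)"
proof (induction w arbitrary: z)
  case Nil then show ?case by simp
next
  case (Cons x w)
  obtain n b where x: "x = (n, b)" by (cases x)
  have IH: "act w (pt z) = pt (z + E0 w)" using Cons by simp
  have z': "z + E0 w \<ge> 3" using Cons.prems E0_abs[of w] by simp
  define z' where "z' = z + E0 w"
  have h0: "\<not> pt z' 0" "\<not> pt z' 1" using z' by (auto simp: pt_def z'_def)
  have "Xg n b (pt z') = pt (z' + (if n = 0 then (if b then 1 else -1) else 0))"
  proof (cases n)
    case 0
    then show ?thesis
    proof (cases b)
      case True
      show ?thesis
      proof (rule ext)
        fix y
        show "Xg n b (pt z') y = pt (z' + (if n = 0 then (if b then 1 else -1) else 0)) y"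
          using 0 True h0 by (cases y) (auto simp: pt_def Xg.simps)
      qed
    next
      case False
      then show ?thesis using 0 h0
        by (auto simp: stl_def pt_def fun_eq_iff Xg.simps)
    qed
  next
    case (Suc m)
    then show ?thesis using h0 by simp
  qed
  then show ?case using IH x by (simp add: z'_def algebra_simps)
qed

lemma pt_inj: "0 \<le> a \<Longrightarrow> 0 \<le> b \<Longrightarrow> pt a = pt b \<Longrightarrow> a = b"
proof -
  assume a: "0 \<le> a" and b: "0 \<le> b" and e: "pt a = pt b"
  have "pt a (nat a)" "pt b (nat b)" using a b by (auto simp: pt_def)
  then have "pt b (nat a)" "pt a (nat b)" using e by auto
  then show "a = b" using a b by (auto simp: pt_def)
qed

lemma E0_zero: "act w = id \<Longrightarrow> E0 w = 0"
proof -
  assume A: "act w = id"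
  define z where "z = int (length w) + 2"
  have "act w (pt z) = pt (z + E0 w)" using pt_act[of w z] by (simp add: z_def)
  then have "pt z = pt (z + E0 w)" using A by simp
  moreover have "0 \<le> z + E0 w" using E0_abs[of w] by (simp add: z_def)
  ultimately have "z = z + E0 w" using pt_inj[of z "z + E0 w"] by (simp add: z_def)
  then show ?thesis by simp
qed

definition sh :: "letter list \<Rightarrow> letter list" where
  "sh w = map (\<lambda>x. (fst x - 1, snd x)) w"

lemma sh_act: "\<forall>x\<in>set w. fst x \<ge> 1 \<Longrightarrow> act w (scons True s) = scons True (act (sh w) s)"
proof (induction w)
  case Nil then show ?case by (simp add: sh_def)
next
  case (Cons x w)
  obtain m b where x: "x = (Suc m, b)" using Cons.prems by (cases x; cases "fst x") auto
  show ?case using Cons x by (simp add: sh_def)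
qed

lemma sh_id: "\<forall>x\<in>set w. fst x \<ge> 1 \<Longrightarrow> act w = id \<Longrightarrow> act (sh w) = id"
proof -
  assume a: "\<forall>x\<in>set w. fst x \<ge> 1" and A: "act w = id"
  show ?thesis
  proof
    fix s
    have "scons True s = scons True (act (sh w) s)" using sh_act[OF a, of s] A by simp
    then have "stl (scons True s) = stl (scons True (act (sh w) s))" by simp
    then show "act (sh w) s = id s" by simp
  qed
qed

lemma X0i_comm: "1 \<le> n \<Longrightarrow> Xg 0 False (Xg n b s) = Xg (Suc n) b (Xg 0 False s)"
proof -
  assume "1 \<le> n"
  then obtain m where n: "n = Suc m" by (cases n) auto
  show ?thesis unfolding n
    by (cases "s 0"; cases "s 1"; rule seq_ext) (simp_all add: stl_def Xg.simps)
qed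

lemma funpow_comm: "1 \<le> n \<Longrightarrow> (Xg 0 False ^^ c) (Xg n b s) = Xg (n + c) b ((Xg 0 False ^^ c) s)"
proof (induction c)
  case 0 then show ?case by simp
next
  case (Suc c)
  then show ?case using X0i_comm[of "n + c" b] by simp
qed

lemma funpow_inv: "(Xg 0 False ^^ c) ((Xg 0 True ^^ c) t) = t"
proof (induction c arbitrary: t)
  case 0 then show ?case by simp
next
  case (Suc c)
  have "(Xg 0 False ^^ Suc c) ((Xg 0 True ^^ Suc c) t)
      = (Xg 0 False ^^ c) (Xg 0 False (Xg 0 True ((Xg 0 True ^^ c) t)))"
    by (simp add: funpow_swap1)
  also have "\<dots> = t" using Xg_inv[of 0 False] Suc by simp
  finally show ?case .
qed

fun elim :: "nat \<Rightarrow> letter list \<Rightarrow> letter list" where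
  "elim c [] = []"
| "elim c (x # w) = (if fst x = 0 then elim (if snd x then c - 1 else Suc c) w
                      else (fst x + c, snd x) # elim c w)"

fun celim :: "nat \<Rightarrow> letter list \<Rightarrow> nat" where
  "celim c [] = c"
| "celim c (x # w) = (if fst x = 0 then celim (if snd x then c - 1 else Suc c) w
                      else celim c w)"

lemma elim_act: "length w \<le> c \<Longrightarrow>
  (Xg 0 False ^^ c) (act w s) = act (elim c w) ((Xg 0 False ^^ (celim c w)) s)"
proof (induction w arbitrary: c)
  case Nil then show ?case by simp
next
  case (Cons x w)
  obtain n b where x: "x = (n, b)" by (cases x)
  show ?case
  proof (cases "n = 0")
    case True
    show ?thesis
    proof (cases b)
      case True
      obtain c' where c: "c = Suc c'" using Cons.prems by (cases c) auto
      have "(Xg 0 False ^^ c) (act (x # w) s) = (Xg 0 False ^^ c') (Xg 0 False (Xg 0 True (act w s)))"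
        using x `n = 0` True c by (simp only: funpow_Suc_right o_apply act.simps fst_conv snd_conv)
      also have "\<dots> = (Xg 0 False ^^ c') (act w s)" using Xg_inv[of 0 False] by simp
      also have "\<dots> = act (elim c' w) ((Xg 0 False ^^ (celim c' w)) s)"
        using Cons c by simp
      finally show ?thesis using x `n = 0` True c by simp
    next
      case False
      have "(Xg 0 False ^^ c) (act (x # w) s) = (Xg 0 False ^^ Suc c) (act w s)"
        using x `n = 0` False by (simp only: funpow_Suc_right o_apply act.simps fst_conv snd_conv)
      also have "\<dots> = act (elim (Suc c) w) ((Xg 0 False ^^ (celim (Suc c) w)) s)"
        using Cons.IH[of "Suc c"] Cons.prems by simp
      finally show ?thesis using x `n = 0` False by simp
    qed
  next
    case False
    have "(Xg 0 False ^^ c) (act (x # w) s) = Xg (n + c) b ((Xg 0 False ^^ c) (act w s))"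
      using x False funpow_comm[of n c b] by simp
    then show ?thesis using Cons x False by simp
  qed
qed

lemma celim_val: "length w \<le> c \<Longrightarrow> int (celim c w) = int c - E0 w"
  by (induction w arbitrary: c) auto

fun par_ok :: "nat \<Rightarrow> letter list \<Rightarrow> bool" where
  "par_ok b [] = True"
| "par_ok b (x # w) = (even (fst x + b) \<and> par_ok (Suc b) w)"

lemma par_ok_2: "par_ok (b + 2) w = par_ok b w"
  by (induction w arbitrary: b) auto

lemma par_ok_even: "even m \<Longrightarrow> par_ok (b + m) w = par_ok b w"
proof -
  assume "even m"
  then obtain q where "m = 2 * q" by auto
  then show ?thesis
  proof (induction q arbitrary: m)
    case 0 then show ?case by simp
  next
    case (Suc q)
    then show ?case using par_ok_2[of "b + 2 * q" w] by (simp add: algebra_simps)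
  qed
qed

lemma par_ok_append: "par_ok b (xs @ ys) = (par_ok b xs \<and> par_ok (b + length xs) ys)"
  by (induction xs arbitrary: b) auto

lemma elim_par: "length w \<le> c \<Longrightarrow> par_ok b w \<Longrightarrow> par_ok (b + c) (elim c w)"
proof (induction w arbitrary: b c)
  case Nil then show ?case by simp
next
  case (Cons x w)
  obtain n s where x: "x = (n, s)" by (cases x)
  show ?case
  proof (cases "n = 0")
    case True
    show ?thesis
    proof (cases s)
      case True
      obtain c' where c: "c = Suc c'" using Cons.prems by (cases c) auto
      have "par_ok (Suc b + c') (elim c' w)" using Cons.IH[of c' "Suc b"] Cons.prems c x by simp
      then show ?thesis using c x `n = 0` True by simp
    next
      case False
      have "par_ok (Suc b + Suc c) (elim (Suc c) w)" using Cons.IH[of "Suc c" "Suc b"] Cons.prems x by simp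
      then have "par_ok (b + c) (elim (Suc c) w)" using par_ok_2[of "b + c"] by simp
      then show ?thesis using x `n = 0` False by simp
    qed
  next
    case False
    have "par_ok (Suc b + c) (elim c w)" using Cons.IH[of c "Suc b"] Cons.prems x by simp
    moreover have "even (n + b)" using Cons.prems x by simp
    then have "even (n + c + (b + c))" by presburger
    ultimately show ?thesis using x False by simp
  qed
qed

lemma elim_len: "length (elim c w) = length (filter (\<lambda>x. fst x \<noteq> 0) w)"
  by (induction w arbitrary: c) auto

lemma elim_nil: "(elim c w = []) = (\<forall>x\<in>set w. fst x = 0)"
  by (induction w arbitrary: c) auto

lemma allzero: "par_ok b w \<Longrightarrow> \<forall>x\<in>set w. fst x = 0 \<Longrightarrow> E0 w = 0 \<Longrightarrow> w = []"
proof (cases w)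
  case (Cons x r)
  assume a: "par_ok b w" "\<forall>x\<in>set w. fst x = 0" "E0 w = 0"
  show ?thesis
  proof (cases r)
    case Nil then show ?thesis using a Cons by (auto split: if_splits)
  next
    case (Cons y r')
    then show ?thesis using a `w = x # r` by auto
  qed
qed simp

lemma sh_par: "\<forall>x\<in>set w. fst x \<ge> 1 \<Longrightarrow> par_ok b w \<Longrightarrow> par_ok (Suc b) (sh w)"
proof (induction w arbitrary: b)
  case Nil then show ?case by (simp add: sh_def)
next
  case (Cons x w)
  then have "even (fst x - 1 + Suc b)" by (cases "fst x") auto
  then show ?case using Cons by (simp add: sh_def)
qed

lemma sh_sum: "\<forall>x\<in>set w. fst x \<ge> 1 \<Longrightarrow> sum_list (map fst (sh w)) + length w = sum_list (map fst w)"
  by (induction w) (auto simp: sh_def)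

lemma inner:
  assumes IH: "\<And>w' b'. length w' < L \<Longrightarrow> w' \<noteq> [] \<Longrightarrow> par_ok b' w' \<Longrightarrow> act w' \<noteq> id"
  shows "length w = L \<Longrightarrow> w \<noteq> [] \<Longrightarrow> par_ok b w \<Longrightarrow> act w \<noteq> id"
proof (induction "sum_list (map fst w)" arbitrary: w b rule: less_induct)
  case less
  show ?case
  proof
    assume A: "act w = id"
    show False
    proof (cases "\<exists>x\<in>set w. fst x = 0")
      case True
      have E: "E0 w = 0" using A E0_zero by blast
      define c where "c = length w"
      have cel: "celim c w = c" using celim_val[of w c] E by (simp add: c_def)
      have eq: "\<And>s. (Xg 0 False ^^ c) s = act (elim c w) ((Xg 0 False ^^ c) s)"
        using elim_act[of w c] A cel by (simp add: c_def)
      have A2: "act (elim c w) = id"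
      proof
        fix t
        show "act (elim c w) t = id t"
          using eq[of "(Xg 0 True ^^ c) t"] funpow_inv[of c t] by simp
      qed
      from True obtain y where y: "y \<in> set w" "fst y = 0" by blast
      have "length (elim c w) < length w"
        unfolding elim_len using length_filter_less[OF y(1), of "\<lambda>x. fst x \<noteq> 0"] y(2) by blast
      moreover have "elim c w \<noteq> []"
        using elim_nil[of c w] allzero[of b w] less.prems E by auto
      moreover have "par_ok (b + c) (elim c w)" using elim_par[of w c b] less.prems
        by (simp add: c_def)
      ultimately show False using IH A2 less.prems by blast
    next
      case False
      then have ge: "\<forall>x\<in>set w. fst x \<ge> 1" by (simp add: Suc_le_eq)
      have "act (sh w) = id" using sh_id[OF ge A] .
      moreover have "sum_list (map fst (sh w)) < sum_list (map fst w)"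
      proof -
        have "length w > 0" using less.prems by blast
        then show ?thesis using sh_sum[OF ge] by linarith
      qed
      moreover have "length (sh w) = L" "sh w \<noteq> []" using less.prems by (auto simp: sh_def)
      moreover have "par_ok (Suc b) (sh w)" using sh_par[OF ge] less.prems by simp
      ultimately show False using less.hyps by blast
    qed
  qed
qed

lemma main: "w \<noteq> [] \<Longrightarrow> par_ok b w \<Longrightarrow> act w \<noteq> id"
proof (induction "length w" arbitrary: w b rule: less_induct)
  case less
  show ?case using inner[of "length w" w b] less by blast
qed

lemma par_concat: "\<forall>x\<in>set L. par_ok 0 x \<and> even (length x) \<Longrightarrow> par_ok 0 (concat L)"
proof (induction L)
  case Nil then show ?case by simp
next
  case (Cons x L)
  then show ?case using par_ok_even[of "length x" 0 "concat L"] by (simp add: par_ok_append)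
qed

theorem lemma3:
  fixes k :: nat and i j :: "nat \<Rightarrow> nat" and eps delta :: "nat \<Rightarrow> int"
  assumes "k \<ge> 1"
    and "\<And>t. 1 \<le> t \<Longrightarrow> t \<le> k \<Longrightarrow> even (i t)"
    and "\<And>t. 1 \<le> t \<Longrightarrow> t \<le> k \<Longrightarrow> odd (j t)"
    and "\<And>t. 1 \<le> t \<Longrightarrow> t \<le> k \<Longrightarrow> eps t \<in> {1, -1}"
    and "\<And>t. 1 \<le> t \<Longrightarrow> t \<le> k \<Longrightarrow> delta t \<in> {1, -1}"
  shows "\<not> F_eq (concat (map (\<lambda>t. [letter_pow (i t) (eps t), letter_pow (j t) (delta t)]) [1..<Suc k])) []"
proof
  define w where "w = concat (map (\<lambda>t. [letter_pow (i t) (eps t), letter_pow (j t) (delta t)]) [1..<Suc k])"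
  assume "F_eq (concat (map (\<lambda>t. [letter_pow (i t) (eps t), letter_pow (j t) (delta t)]) [1..<Suc k])) []"
  then have "act w = id" using F_eq_act unfolding w_def by fastforce
  moreover have "w \<noteq> []" using assms(1) by (simp add: w_def)
  moreover have "par_ok 0 w" unfolding w_def
    by (rule par_concat) (auto simp: letter_pow_def assms(2,3))
  ultimately show False using main by blast
qed

end
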